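(* Let $m=2k+1$ with $k\in\mathbb{N}$. For every $\beta\in(1,\frac{k+1+\sqrt{k^2+6k+5}}{2})$, every $x\in(0,\frac{m}{\beta-1})$ has uncountably many $\beta$-expansions, i.e. $\Sigma_{\beta,m}(x)$ is uncountable.
   Context: $\Sigma_{\beta,m}(x)=\{(\epsilon_i)_{i=1}^\infty\in\{0,\ldots,m\}^{\mathbb{N}}:\sum_{i\ge1}\epsilon_i\beta^{-i}=x\}$; its elements are the $\beta$-expansions of $x$. *)

theory Defs
  imports "HOL-Analysis.Analysis"
begin

text \<open>A sequence (eps_i) for i = 1,2,... is represented as a function e :: nat => nat
  with e n = eps_(n+1); hence the value is sum over n of e n * beta^-(n+1).\<close>
definition beta_expansions :: "real \<Rightarrow> nat \<Rightarrow> real \<Rightarrow> (nat \<Rightarrow> nat) set" where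
  "beta_expansions \<beta> m x =
     {e. (\<forall>n. e n \<le> m) \<and> ((\<lambda>n. real (e n) / \<beta> ^ (Suc n)) sums x)}"

end

theory Submission imports Defs begin

definition valid :: "real \<Rightarrow> nat \<Rightarrow> real \<Rightarrow> real \<Rightarrow> nat \<Rightarrow> bool" where
  "valid b m M y d \<longleftrightarrow> d \<le> m \<and> 0 < b*y - real d \<and> b*y - real d < M"

definition sw :: "real \<Rightarrow> nat \<Rightarrow> real \<Rightarrow> real \<Rightarrow> bool" where
  "sw b m M y \<longleftrightarrow> (\<exists>d1 d2. d1 \<noteq> d2 \<and> valid b m M y d1 \<and> valid b m M y d2)"

lemma exists_valid:
  assumes "1 < b" "M*(b-1) = real m" "1 < M" "0 < y" "y < M"
  shows "\<exists>d. valid b m M y d"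
proof (cases "b*y - m > 0")
  case True
  have "b*y < b*M" using assms by simp
  moreover have "b*M = M + m" using assms(2) by (simp add: algebra_simps)
  ultimately have "b*y - m < M" by linarith
  then show ?thesis using True assms unfolding valid_def
    by (intro exI[of _ m]) (auto simp: algebra_simps)
next
  case False
  define d where "d = nat (\<lceil>b*y\<rceil> - 1)"
  have p: "0 < b*y" using assms by simp
  have c1: "\<lceil>b*y\<rceil> \<ge> 1" using p by (simp add: one_le_ceiling) 
  hence rd: "real d = real_of_int \<lceil>b*y\<rceil> - 1" unfolding d_def by simp
  have "\<lceil>b*y\<rceil> \<le> int m" using False by (simp add: ceiling_le_iff)
  hence "d \<le> m" unfolding d_def by simp
  moreover have "real_of_int \<lceil>b*y\<rceil> - 1 < b*y" by linarith
  moreover have "b*y \<le> real_of_int \<lceil>b*y\<rceil>" by simp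
  ultimately have "d \<le> m" "0 < b*y - real d" "b*y - real d < M" using rd assms(3) by linarith+
  then show ?thesis unfolding valid_def by blast
qed

lemma step_nonS:
  assumes "1 < b" "M*(b-1) = real m" "real m = 2*real k + 1" "b < M + real k"
    "\<not> sw b m M y" "valid b m M y d"
  shows "(b*y \<le> 1 \<and> b*y - d = b*y) \<or> (b*y \<ge> M + m - 1 \<and> M - (b*y - d) = b*(M - y))
         \<or> sw b m M (b*y - d)"
proof -
  have bM: "b*M = M + m" using assms(2) by (simp add: algebra_simps)
  have nv: "\<And>d'. d' \<noteq> d \<Longrightarrow> \<not> valid b m M y d'" using assms(5,6) unfolding sw_def by blast
  have dm: "d \<le> m" "0 < b*y - d" "b*y - d < M" using assms(6) unfolding valid_def by auto
  show ?thesis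
  proof (cases "d = 0")
    case True
    have "m \<ge> 1" using assms(3) by simp
    have "\<not> valid b m M y 1" using nv True by simp
    hence "b*y \<le> 1" using dm True \<open>m \<ge> 1\<close> unfolding valid_def by auto
    then show ?thesis using True by simp
  next
    case d0: False
    show ?thesis
    proof (cases "d = m")
      case True
      have "\<not> valid b m M y (m-1)" using nv True d0 by simp
      hence "b*y - real (m-1) \<ge> M" using dm True d0 unfolding valid_def by auto
      hence "b*y \<ge> M + m - 1" using d0 True by (simp add: of_nat_diff)
      moreover have "M - (b*y - d) = b*(M - y)" using True bM by (simp add: algebra_simps)
      ultimately show ?thesis by simp
    next
      case dm1: False
      have "\<not> valid b m M y (d-1)" using nv d0 by simp
      hence a1: "b*y - real (d-1) \<ge> M" using dm d0 unfolding valid_def by auto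
      have "\<not> valid b m M y (d+1)" using nv by simp
      hence a2: "b*y - real (d+1) \<le> 0" using dm dm1 unfolding valid_def by auto
      define z where "z = b*y - d"
      have z1: "z \<ge> M - 1" using a1 d0 unfolding z_def by (simp add: of_nat_diff)
      have z2: "z \<le> 1" using a2 unfolding z_def by simp
      have "b*z \<ge> b*(M-1)" using z1 assms(1) by simp
      hence l: "b*z > k + 1" using bM assms(3,4) by (simp add: algebra_simps)
      have "b*z \<le> b" using z2 assms(1) by simp
      hence u: "b*z < k + M" using assms(4) by simp
      have "valid b m M z k" "valid b m M z (k+1)"
        using l u assms(3) unfolding valid_def by auto
      hence "sw b m M z" unfolding sw_def by (intro exI[of _ k] exI[of _ "k+1"]) auto
      then show ?thesis unfolding z_def by simp
    qed
  qed
qed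

lemma grow_false:
  fixes w :: "nat \<Rightarrow> real"
  assumes "1 < b" "0 < w 0" "\<forall>i. w (Suc i) = b * w i \<and> b * w i \<le> 1"
  shows False
proof -
  have e: "w i = b^i * w 0" for i
  proof (induction i)
    case (Suc i) then show ?case using assms(3) by (simp add: mult.assoc)
  qed simp
  obtain n where n: "1 / w 0 < b^n" using real_arch_pow[OF assms(1)] by blast
  hence "1 < b^n * w 0" using assms(2) by (simp add: field_simps)
  also have "b^n * w 0 \<le> b * (b^n * w 0)" using mult_right_mono[of 1 b "b^n * w 0"] assms(1,2) by simp
  also have "\<dots> = b * w n" using e[of n] by simp
  also have "\<dots> \<le> 1" using assms(3) by blast
  finally show False by simp
qed

lemma no_escape:
  assumes "1 < b" "M*(b-1) = real m" "real m = 2*real k + 1" "b < M + real k"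
    "\<forall>i. 0 < z i \<and> z i < M" "\<forall>i. \<not> sw b m M (z i)"
    "\<forall>i. valid b m M (z i) (d i)" "\<forall>i. z (Suc i) = b * z i - d i"
  shows False
proof -
  have bM: "b*M = M + m" using assms(2) by (simp add: algebra_simps)
  define P where "P i \<longleftrightarrow> b * z i \<le> 1 \<and> z (Suc i) = b * z i" for i
  define Q where "Q i \<longleftrightarrow> b * z i \<ge> M + m - 1 \<and> M - z (Suc i) = b * (M - z i)" for i
  have PQ: "P i \<or> Q i" for i
  proof -
    have h: "(b*z i \<le> 1 \<and> b*z i - d i = b*z i) \<or> (b*z i \<ge> M + m - 1 \<and> M - (b*z i - d i) = b*(M - z i))
         \<or> sw b m M (b*z i - d i)"
      using step_nonS[OF assms(1-4)] assms(6,7) by blast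
    have "\<not> sw b m M (b*z i - d i)" using assms(6,8) by metis
    with h show ?thesis unfolding P_def Q_def using assms(8) by simp
  qed
  have big: "M + m - 1 > b" using assms(3,4) by simp
  have PP: "P (Suc i)" if "P i" for i
  proof -
    have "z (Suc i) \<le> 1" using that unfolding P_def by simp
    hence "b * z (Suc i) \<le> b" using assms(1) by simp
    hence "\<not> Q (Suc i)" using big unfolding Q_def by simp
    thus ?thesis using PQ by blast
  qed
  have QQ: "Q (Suc i)" if "Q i" for i
  proof -
    have "M - z (Suc i) \<le> 1" using that bM unfolding Q_def by (simp add: algebra_simps)
    hence "b * (M - 1) \<le> b * z (Suc i)" using assms(1) by simp
    hence "b * z (Suc i) > 1" using bM big by (simp add: algebra_simps)
    hence "\<not> P (Suc i)" unfolding P_def by simp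
    thus ?thesis using PQ by blast
  qed
  show False
  proof (cases "P 0")
    case True
    have "P i" for i by (induction i) (use True PP in auto)
    thus False using grow_false[OF assms(1), of z] assms(5) unfolding P_def by auto
  next
    case False
    hence "Q 0" using PQ by blast
    hence q: "Q i" for i by (induction i) (use QQ in auto)
    have "\<forall>i. (\<lambda>i. M - z i) (Suc i) = b * (M - z i) \<and> b * (M - z i) \<le> 1"
    proof
      fix i show "(\<lambda>i. M - z i) (Suc i) = b * (M - z i) \<and> b * (M - z i) \<le> 1"
        using q[of i] bM unfolding Q_def by (simp add: algebra_simps)
    qed
    thus False using grow_false[OF assms(1), of "\<lambda>i. M - z i"] assms(5) by auto
  qed
qed


definition lo :: "real \<Rightarrow> nat \<Rightarrow> real \<Rightarrow> real \<Rightarrow> nat" where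
  "lo b m M y = (LEAST d. valid b m M y d)"
definition hi :: "real \<Rightarrow> nat \<Rightarrow> real \<Rightarrow> real \<Rightarrow> nat" where
  "hi b m M y = (LEAST d. valid b m M y d \<and> d \<noteq> lo b m M y)"
definition dig :: "real \<Rightarrow> nat \<Rightarrow> real \<Rightarrow> (nat \<Rightarrow> bool) \<Rightarrow> real \<Rightarrow> nat \<Rightarrow> nat" where
  "dig b m M s y c = (if sw b m M y \<and> s c then hi b m M y else lo b m M y)"

primrec st :: "real \<Rightarrow> nat \<Rightarrow> real \<Rightarrow> (nat \<Rightarrow> bool) \<Rightarrow> real \<Rightarrow> nat \<Rightarrow> real \<times> nat" where
  "st b m M s x 0 = (x, 0)"
| "st b m M s x (Suc n) = (b * fst (st b m M s x n) - real (dig b m M s (fst (st b m M s x n)) (snd (st b m M s x n))),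
      snd (st b m M s x n) + (if sw b m M (fst (st b m M s x n)) then 1 else 0))"

lemma uncountable_bool_seq: "uncountable (UNIV :: (nat \<Rightarrow> bool) set)"
proof
  assume c: "countable (UNIV :: (nat \<Rightarrow> bool) set)"
  define F where "F = from_nat_into (UNIV :: (nat \<Rightarrow> bool) set)"
  have r: "range F = UNIV" unfolding F_def using range_from_nat_into[OF _ c] by simp
  define g where "g n = (\<not> F n n)" for n
  obtain i where "g = F i" using r by (metis UNIV_I imageE)
  hence "g i = F i i" by simp
  thus False unfolding g_def by simp
qed

locale bx =
  fixes b :: real and m k :: nat and M x :: real
  assumes b1: "1 < b" and Mb: "M*(b-1) = real m" and mk: "real m = 2*real k + 1"
    and bMk: "b < M + real k" and M1: "1 < M" and x0: "0 < x" and xM: "x < M"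
begin

abbreviation "Y s n \<equiv> fst (st b m M s x n)"
abbreviation "C s n \<equiv> snd (st b m M s x n)"
definition E :: "(nat \<Rightarrow> bool) \<Rightarrow> nat \<Rightarrow> nat" where "E s n = dig b m M s (Y s n) (C s n)"

lemma lo_valid: "0 < y \<Longrightarrow> y < M \<Longrightarrow> valid b m M y (lo b m M y)"
  unfolding lo_def using exists_valid[OF b1 Mb M1] by (metis LeastI_ex)

lemma hi_valid: "sw b m M y \<Longrightarrow> valid b m M y (hi b m M y) \<and> hi b m M y \<noteq> lo b m M y"
proof -
  assume "sw b m M y"
  then obtain d1 d2 where "d1 \<noteq> d2" "valid b m M y d1" "valid b m M y d2" unfolding sw_def by blast
  hence "\<exists>d. valid b m M y d \<and> d \<noteq> lo b m M y" by metis
  thus ?thesis unfolding hi_def by (rule LeastI_ex)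
qed

lemma dig_valid: "0 < y \<Longrightarrow> y < M \<Longrightarrow> valid b m M y (dig b m M s y c)"
  unfolding dig_def using lo_valid hi_valid by auto

lemma Y_Suc: "Y s (Suc n) = b * Y s n - real (E s n)" by (simp add: E_def)
lemma C_Suc: "C s (Suc n) = C s n + (if sw b m M (Y s n) then 1 else 0)" by simp

lemma Y_range: "0 < Y s n \<and> Y s n < M"
proof (induction n)
  case 0 then show ?case using x0 xM by simp
next
  case (Suc n)
  have "valid b m M (Y s n) (E s n)" unfolding E_def using dig_valid Suc by blast
  then show ?case unfolding Y_Suc valid_def by simp
qed

lemma E_valid: "valid b m M (Y s n) (E s n)"
  unfolding E_def using dig_valid Y_range by blast

lemma partial: "x = (\<Sum>i<n. real (E s i) / b ^ Suc i) + Y s n / b ^ n"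
proof (induction n)
  case 0 then show ?case by simp
next
  case (Suc n)
  have "Y s n / b^n = real (E s n) / b ^ Suc n + Y s (Suc n) / b ^ Suc n"
    unfolding Y_Suc using b1 by (simp add: field_simps)
  then show ?case using Suc by simp
qed

lemma E_sums: "(\<lambda>i. real (E s i) / b ^ Suc i) sums x"
proof -
  have t0: "(\<lambda>n. M * inverse b ^ n) \<longlonglongrightarrow> 0"
    using b1 by (intro tendsto_mult_right_zero LIMSEQ_power_zero) (simp add: inverse_less_1_iff)
  have "(\<lambda>n. Y s n / b ^ n) \<longlonglongrightarrow> 0"
  proof (rule tendsto_sandwich[OF _ _ tendsto_const t0])
    show "\<forall>\<^sub>F n in sequentially. 0 \<le> Y s n / b ^ n" using Y_range[of s] b1 by (simp add: less_imp_le)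
    show "\<forall>\<^sub>F n in sequentially. Y s n / b ^ n \<le> M * inverse b ^ n"
    proof (rule always_eventually, rule allI)
      fix n
      have "Y s n / b ^ n \<le> M / b ^ n" using Y_range[of s n] b1 by (simp add: divide_right_mono less_imp_le)
      thus "Y s n / b ^ n \<le> M * inverse b ^ n" by (simp add: field_simps power_inverse)
    qed
  qed
  hence "(\<lambda>n. x - Y s n / b ^ n) \<longlonglongrightarrow> x - 0" by (intro tendsto_diff tendsto_const)
  moreover have "(\<lambda>n. x - Y s n / b ^ n) = (\<lambda>n. \<Sum>i<n. real (E s i) / b ^ Suc i)"
    using partial[of s] by (auto simp: algebra_simps)
  ultimately show ?thesis unfolding sums_def by simp
qed

lemma E_mem: "E s \<in> beta_expansions b m x"
  unfolding beta_expansions_def using E_valid E_sums unfolding valid_def by auto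

lemma inf_sw: "\<exists>c\<ge>a. sw b m M (Y s c)"
proof (rule ccontr)
  assume "\<not> ?thesis"
  hence ns: "\<forall>i. \<not> sw b m M (Y s (a + i))" by auto
  show False
    by (rule no_escape[OF b1 Mb mk bMk, of "\<lambda>i. Y s (a+i)" "\<lambda>i. E s (a+i)"])
       (use ns Y_range E_valid Y_Suc in auto)
qed

lemma next_sw: "\<exists>c\<ge>a. sw b m M (Y s c) \<and> C s c = C s a"
proof -
  define c where "c = (LEAST c. a \<le> c \<and> sw b m M (Y s c))"
  have c1: "a \<le> c \<and> sw b m M (Y s c)" unfolding c_def using inf_sw[of a s] by (metis (mono_tags, lifting) LeastI_ex)
  have c2: "\<not> sw b m M (Y s i)" if "a \<le> i" "i < c" for i
    using not_less_Least[of i "\<lambda>c. a \<le> c \<and> sw b m M (Y s c)"] that unfolding c_def by blast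
  have "a + j \<le> c \<longrightarrow> C s (a + j) = C s a" for j
  proof (induction j)
    case (Suc j)
    then show ?case using c2[of "a+j"] by auto
  qed simp
  from this[of "c - a"] c1 show ?thesis by (intro exI[of _ c]) auto
qed

lemma all_counts: "\<exists>n. C s n = j \<and> sw b m M (Y s n)"
proof (induction j)
  case 0 then show ?case using next_sw[of 0 s] by auto
next
  case (Suc j)
  then obtain n where n: "C s n = j" "sw b m M (Y s n)" by blast
  hence "C s (Suc n) = Suc j" by simp
  then show ?case using next_sw[of "Suc n" s] by auto
qed

lemma E_inj: "inj E"
proof
  fix s s' assume eq: "E s = E s'"
  have st: "st b m M s x n = st b m M s' x n" for n
  proof (induction n)
    case (Suc n)
    have "E s n = E s' n" using eq by simp
    hence "dig b m M s (Y s n) (C s n) = dig b m M s' (Y s' n) (C s' n)" unfolding E_def .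
    then show ?case using Suc by simp
  qed simp
  show "s = s'"
  proof
    fix j
    obtain n where n: "C s n = j" "sw b m M (Y s n)" using all_counts by blast
    have "E s n = E s' n" using eq by simp
    hence "dig b m M s (Y s n) j = dig b m M s' (Y s n) j" unfolding E_def using st[of n] n by simp
    thus "s j = s' j" using hi_valid[OF n(2)] n(2) unfolding dig_def by (auto split: if_splits)
  qed
qed

lemma uncountable_result: "uncountable (beta_expansions b m x)"
proof
  assume "countable (beta_expansions b m x)"
  hence "countable (range E)" by (rule countable_subset[rotated]) (use E_mem in auto)
  hence "countable (UNIV :: (nat \<Rightarrow> bool) set)" using countable_image_inj_on E_inj by blast
  thus False using uncountable_bool_seq by blast
qed

end


theorem proposition3p6:
  fixes k m :: nat and \<beta> x :: real
  assumes "m = 2 * k + 1"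
    and "1 < \<beta>"
    and "\<beta> < (real k + 1 + sqrt (real k ^ 2 + 6 * real k + 5)) / 2"
    and "0 < x" and "x < real m / (\<beta> - 1)"
  shows "uncountable (beta_expansions \<beta> m x)"
proof -
  define r where "r = sqrt (real k ^ 2 + 6 * real k + 5)"
  define M where "M = real m / (\<beta> - 1)"
  have mk: "real m = 2*real k + 1" using assms(1) by simp
  have r0: "0 \<le> r" unfolding r_def by simp
  have nn: "0 \<le> real k ^ 2 + 6 * real k + 5" by simp
  have rr: "r * r = real k ^ 2 + 6 * real k + 5" unfolding r_def
    using real_sqrt_pow2[OF nn] by (simp only: power2_eq_square)
  have rk: "r < real k + 3"
  proof (rule ccontr)
    assume "\<not> r < real k + 3"
    hence "(real k + 3) * (real k + 3) \<le> r * r" by (intro mult_mono) auto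
    thus False using rr by (simp add: algebra_simps power2_eq_square)
  qed
  have b2: "\<beta> < real k + 2" using assms(3) rk unfolding r_def by simp
  have q: "\<beta>^2 - (real k + 1) * \<beta> - (real k + 1) < 0"
  proof (cases "2*\<beta> - real k - 1 \<ge> 0")
    case True
    have "2*\<beta> - real k - 1 < r" using assms(3) unfolding r_def by simp
    hence "(2*\<beta> - real k - 1) * (2*\<beta> - real k - 1) < r * r"
      using True by (intro mult_strict_mono) auto
    thus ?thesis using rr by (simp add: algebra_simps power2_eq_square)
  next
    case False
    hence "\<beta> < (real k + 1)/2" by simp
    hence "\<beta> * \<beta> < (real k + 1) * \<beta>" using assms(2) by (intro mult_strict_right_mono) auto
    thus ?thesis by (simp add: power2_eq_square)
  qed
  have bpos: "0 < \<beta> - 1" using assms(2) by simp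
  have Mb: "M * (\<beta> - 1) = real m" unfolding M_def using bpos by simp
  have M1: "1 < M" unfolding M_def using bpos b2 mk by (simp add: field_simps)
  have bMk: "\<beta> < M + real k"
  proof (cases "\<beta> \<le> real k")
    case True then show ?thesis using M1 by simp
  next
    case False
    have "(\<beta> - real k) * (\<beta> - 1) < real m" using q mk by (simp add: algebra_simps power2_eq_square)
    hence "\<beta> - real k < M" unfolding M_def using bpos by (simp add: field_simps)
    then show ?thesis by simp
  qed
  interpret bx \<beta> m k M x
    using assms(2,4,5) Mb mk bMk M1 unfolding M_def by unfold_locales auto
  show ?thesis by (rule uncountable_result)
qed

end
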